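(* Let $\mathcal{H}$ be a finite-dimensional real Hilbert space, let $A\colon \mathcal{H}\rightrightarrows\mathcal{H}$ be maximally monotone, let $B\colon \mathcal{H}\to\mathcal{H}$ be monotone and locally Lipschitz continuous, and suppose $(A+B)^{-1}(0)\neq\varnothing$. Fix $\delta\in(0,1)$, $\sigma\in(0,1)$, initial points $x_0,x_{-1}\in\mathcal{H}$ and an initial stepsize $\lambda_{-1}>0$. For $k=0,1,2,\dots$, having $x_k$, $x_{k-1}$ and $\lambda_{k-1}$, choose $\rho_k\in\{1,\sigma^{-1}\}$, set $\lambda_k=\rho_k\lambda_{k-1}\sigma^{i}$ where $i$ is the smallest nonnegative integer such that the point $$x_{k+1} := J_{\lambda_k A}\bigl(x_k - \lambda_k B(x_k) - \lambda_{k-1}(B(x_k)-B(x_{k-1}))\bigr)$$ satisfies $\lambda_k\|B(x_{k+1})-B(x_k)\|\leq \frac{\delta}{2}\|x_{k+1}-x_k\|$, and define $x_{k+1}$ accordingly. Then the sequence $(x_k)$ so generated converges to a point contained in $(A+B)^{-1}(0)$.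
   Context: $J_{\lambda A}:=(I+\lambda A)^{-1}$ denotes the resolvent of $\lambda A$. $B$ is locally Lipschitz if every point has a neighbourhood on which $B$ is Lipschitz. *)

theory Defs
  imports "HOL-Analysis.Analysis"
begin

definition monotone_op :: "('a::real_inner \<Rightarrow> 'a set) \<Rightarrow> bool" where
  "monotone_op A \<longleftrightarrow>
     (\<forall>x y u v. u \<in> A x \<longrightarrow> v \<in> A y \<longrightarrow> 0 \<le> (u - v) \<bullet> (x - y))"

definition maximal_monotone :: "('a::real_inner \<Rightarrow> 'a set) \<Rightarrow> bool" where
  "maximal_monotone A \<longleftrightarrow> monotone_op A \<and>
     (\<forall>A'. monotone_op A' \<and> (\<forall>x. A x \<subseteq> A' x) \<longrightarrow> A' = A)"

definition monotone_fun :: "('a::real_inner \<Rightarrow> 'a) \<Rightarrow> bool" where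
  "monotone_fun B \<longleftrightarrow> (\<forall>x y. 0 \<le> (B x - B y) \<bullet> (x - y))"

definition locally_lipschitz :: "('a::metric_space \<Rightarrow> 'b::metric_space) \<Rightarrow> bool" where
  "locally_lipschitz B \<longleftrightarrow>
     (\<forall>x. \<exists>U L. open U \<and> x \<in> U \<and> L-lipschitz_on U B)"

text \<open>Resolvent J_{lA} = (I + l A)^{-1}, evaluated at z: the (for maximally
  monotone A and l > 0 unique) point p with z \<in> p + l A p.\<close>
definition resolvent :: "real \<Rightarrow> ('a::real_vector \<Rightarrow> 'a set) \<Rightarrow> 'a \<Rightarrow> 'a" where
  "resolvent l A z = (THE p. \<exists>u\<in>A p. p + l *\<^sub>R u = z)"

definition zeros_sum :: "('a::real_vector \<Rightarrow> 'a set) \<Rightarrow> ('a \<Rightarrow> 'a) \<Rightarrow> 'a set" where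
  "zeros_sum A B = {x. \<exists>u\<in>A x. u + B x = 0}"

end

theory Submission
  imports Defs
begin

lemma max_mono_ext:
  fixes A :: "'a::real_inner \<Rightarrow> 'a set"
  assumes A: "maximal_monotone A"
    and rel: "\<And>y v. v \<in> A y \<Longrightarrow> 0 \<le> (u - v) \<bullet> (p - y)"
  shows "u \<in> A p"
proof -
  define A' where "A' = A(p := insert u (A p))"
  have mA: "monotone_op A" using A by (simp add: maximal_monotone_def)
  have "monotone_op A'"
    unfolding monotone_op_def
  proof (intro allI impI)
    fix x y u' v' assume u': "u' \<in> A' x" and v': "v' \<in> A' y"
    show "0 \<le> (u' - v') \<bullet> (x - y)"
    proof (cases "u' \<in> A x")
      case True
      show ?thesis
      proof (cases "v' \<in> A y")
        case True
        then show ?thesis using \<open>u' \<in> A x\<close> mA by (simp add: monotone_op_def)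
      next
        case False
        then have "y = p" "v' = u" using v' by (auto simp: A'_def split: if_splits)
        then show ?thesis using rel[OF \<open>u' \<in> A x\<close>]
          by (metis inner_minus_left inner_minus_right minus_diff_eq minus_minus)
      qed
    next
      case False
      then have xp: "x = p" "u' = u" using u' by (auto simp: A'_def split: if_splits)
      show ?thesis
      proof (cases "v' \<in> A y")
        case True
        then show ?thesis using rel xp by simp
      next
        case False
        then have "y = p" "v' = u" using v' by (auto simp: A'_def split: if_splits)
        then show ?thesis using xp by simp
      qed
    qed
  qed
  moreover have "\<forall>x. A x \<subseteq> A' x" by (auto simp: A'_def)
  ultimately have "A' = A" using A by (simp add: maximal_monotone_def)
  moreover have "u \<in> A' p" by (simp add: A'_def)
  ultimately show ?thesis by simp
qed

lemma max_mono_closed: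
  fixes A :: "'a::real_inner \<Rightarrow> 'a set"
  assumes A: "maximal_monotone A"
    and p: "P \<longlonglongrightarrow> p" and u: "U \<longlonglongrightarrow> u" and in_A: "\<And>n. U n \<in> A (P n)"
  shows "u \<in> A p"
proof (rule max_mono_ext[OF A])
  fix y v assume v: "v \<in> A y"
  have mA: "monotone_op A" using A by (simp add: maximal_monotone_def)
  have "(\<lambda>n. (U n - v) \<bullet> (P n - y)) \<longlonglongrightarrow> (u - v) \<bullet> (p - y)"
    by (intro tendsto_intros p u)
  moreover have "\<And>n. 0 \<le> (U n - v) \<bullet> (P n - y)"
    using mA in_A v by (simp add: monotone_op_def)
  ultimately show "0 \<le> (u - v) \<bullet> (p - y)"
    by (intro LIMSEQ_le_const) auto
qed

lemma resolvent_eq: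
  fixes A :: "'a::real_inner \<Rightarrow> 'a set"
  assumes mA: "monotone_op A" and l: "l > 0" and u: "u \<in> A p" and eq: "p + l *\<^sub>R u = z"
  shows "resolvent l A z = p"
  unfolding resolvent_def
proof (rule the_equality)
  show "\<exists>u\<in>A p. p + l *\<^sub>R u = z" using u eq by blast
next
  fix q assume "\<exists>u\<in>A q. q + l *\<^sub>R u = z"
  then obtain v where v: "v \<in> A q" "q + l *\<^sub>R v = z" by blast
  have h: "0 \<le> (v - u) \<bullet> (q - p)" using mA v u by (simp add: monotone_op_def)
  have e: "l *\<^sub>R (v - u) = p - q" using eq v(2) by (simp add: algebra_simps)
  have "0 \<le> l * ((v - u) \<bullet> (q - p))" using h l by simp
  also have "l * ((v - u) \<bullet> (q - p)) = (l *\<^sub>R (v - u)) \<bullet> (q - p)" by simp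
  also have "\<dots> = (p - q) \<bullet> (q - p)" using e by simp
  also have "\<dots> = - ((p - q) \<bullet> (p - q))" by (simp add: inner_diff_left inner_diff_right inner_commute)
  finally have "(p - q) \<bullet> (p - q) \<le> 0" by simp
  then show "q = p" by (metis inner_gt_zero_iff not_le right_minus_eq)
qed

lemma df_key:
  fixes a y :: "'i \<Rightarrow> 'a::real_inner"
  assumes J: "finite J" and c0: "\<And>i. i \<in> J \<Longrightarrow> 0 \<le> c i" and c1: "sum c J = 1"
    and zero: "(\<Sum>i\<in>J. c i *\<^sub>R (2 *\<^sub>R p - a i - y i)) = 0"
    and mono: "\<And>i j. i \<in> J \<Longrightarrow> j \<in> J \<Longrightarrow> (a i - a j) \<bullet> (y i - y j) \<le> 0"
  shows "(\<Sum>i\<in>J. c i * ((p - a i) \<bullet> (p - y i))) \<le> 0"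
proof -
  define ab where "ab = (\<Sum>i\<in>J. c i *\<^sub>R a i)"
  define yb where "yb = (\<Sum>i\<in>J. c i *\<^sub>R y i)"
  define S where "S = (\<Sum>i\<in>J. c i * (a i \<bullet> y i))"
  have "(\<Sum>i\<in>J. c i *\<^sub>R (2 *\<^sub>R p - a i - y i)) = (\<Sum>i\<in>J. c i *\<^sub>R (2 *\<^sub>R p)) - ab - yb"
    by (simp add: ab_def yb_def scaleR_diff_right sum_subtractf)
  also have "(\<Sum>i\<in>J. c i *\<^sub>R (2 *\<^sub>R p)) = 2 *\<^sub>R p"
    using c1 by (simp add: scaleR_sum_left[symmetric] sum_distrib_right[symmetric])
  finally have p2: "2 *\<^sub>R p = ab + yb" using zero by (simp add: algebra_simps)
  have lhs: "(\<Sum>i\<in>J. c i * ((p - a i) \<bullet> (p - y i))) = p \<bullet> p - p \<bullet> yb - ab \<bullet> p + S"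
  proof -
    have "(\<Sum>i\<in>J. c i * ((p - a i) \<bullet> (p - y i)))
        = (\<Sum>i\<in>J. c i * (p \<bullet> p) - (p \<bullet> (c i *\<^sub>R y i)) - ((c i *\<^sub>R a i) \<bullet> p) + c i * (a i \<bullet> y i))"
      by (rule sum.cong) (simp_all add: inner_diff_left inner_diff_right algebra_simps)
    also have "\<dots> = (\<Sum>i\<in>J. c i) * (p \<bullet> p) - p \<bullet> yb - ab \<bullet> p + S"
      by (simp add: sum.distrib sum_subtractf sum_distrib_right yb_def ab_def S_def
          inner_sum_left inner_sum_right)
    finally show ?thesis using c1 by simp
  qed
  have dbl: "(\<Sum>i\<in>J. \<Sum>j\<in>J. c i * c j * ((a i - a j) \<bullet> (y i - y j))) = 2 * S - 2 * (ab \<bullet> yb)"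
  proof -
    have "(\<Sum>i\<in>J. \<Sum>j\<in>J. c i * c j * ((a i - a j) \<bullet> (y i - y j)))
       = (\<Sum>i\<in>J. \<Sum>j\<in>J. c j * (c i * (a i \<bullet> y i)) - (c i *\<^sub>R a i) \<bullet> (c j *\<^sub>R y j)
              - (c j *\<^sub>R a j) \<bullet> (c i *\<^sub>R y i) + c i * (c j * (a j \<bullet> y j)))"
      by (intro sum.cong refl) (simp add: inner_diff_left inner_diff_right algebra_simps)
    also have "\<dots> = (\<Sum>i\<in>J. c i * (a i \<bullet> y i)) + (\<Sum>i\<in>J. \<Sum>j\<in>J. c i * (c j * (a j \<bullet> y j)))
        - (\<Sum>i\<in>J. \<Sum>j\<in>J. (c i *\<^sub>R a i) \<bullet> (c j *\<^sub>R y j))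
        - (\<Sum>i\<in>J. \<Sum>j\<in>J. (c j *\<^sub>R a j) \<bullet> (c i *\<^sub>R y i))"
      by (simp add: sum.distrib sum_subtractf sum_distrib_right[symmetric] c1)
    also have "(\<Sum>i\<in>J. \<Sum>j\<in>J. c i * (c j * (a j \<bullet> y j))) = S"
      by (simp add: sum_distrib_left[symmetric] S_def) (simp add: sum_distrib_right[symmetric] c1)
    also have "(\<Sum>i\<in>J. \<Sum>j\<in>J. (c i *\<^sub>R a i) \<bullet> (c j *\<^sub>R y j)) = ab \<bullet> yb"
      by (simp only: ab_def yb_def inner_sum_left inner_sum_right) (rule sum.swap)
    also have "(\<Sum>i\<in>J. \<Sum>j\<in>J. (c j *\<^sub>R a j) \<bullet> (c i *\<^sub>R y i)) = ab \<bullet> yb"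
      by (simp only: ab_def yb_def inner_sum_left inner_sum_right)
    finally show ?thesis by (simp add: S_def)
  qed
  have "(\<Sum>i\<in>J. \<Sum>j\<in>J. c i * c j * ((a i - a j) \<bullet> (y i - y j))) \<le> 0"
    by (intro sum_nonpos mult_nonneg_nonpos mult_nonneg_nonneg c0 mono)
  then have Sle: "S \<le> ab \<bullet> yb" using dbl by simp
  have "(ab - yb) \<bullet> (ab - yb) \<ge> 0" by simp
  then have "4 * (ab \<bullet> yb) \<le> (ab + yb) \<bullet> (ab + yb)"
    by (simp add: inner_diff_left inner_diff_right inner_add_left inner_add_right inner_commute)
  also have "(ab + yb) \<bullet> (ab + yb) = 4 * (p \<bullet> p)"
    by (simp flip: p2)
  finally have abyb: "ab \<bullet> yb \<le> p \<bullet> p" by simp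
  have "p \<bullet> yb + ab \<bullet> p = p \<bullet> (ab + yb)" by (simp add: inner_add_right inner_commute)
  also have "\<dots> = 2 * (p \<bullet> p)" by (simp flip: p2)
  finally have "p \<bullet> yb + ab \<bullet> p = 2 * (p \<bullet> p)" .
  then show ?thesis using lhs Sle abyb by linarith
qed


lemma continuous_on_Max_img:
  fixes f :: "'i \<Rightarrow> 'a::topological_space \<Rightarrow> real"
  assumes "finite I" "I \<noteq> {}" "\<And>i. i \<in> I \<Longrightarrow> continuous_on S (f i)"
  shows "continuous_on S (\<lambda>x. Max ((\<lambda>i. f i x) ` I))"
  using assms
proof (induction I rule: finite_ne_induct)
  case (singleton i) then show ?case by simp
next
  case (insert i I)
  have "(\<lambda>x. Max ((\<lambda>j. f j x) ` insert i I)) = (\<lambda>x. max (f i x) (Max ((\<lambda>j. f j x) ` I)))"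
    using insert by (simp add: Max_insert)
  then show ?case using insert by (auto intro!: continuous_on_max)
qed

lemma df_finite:
  fixes a y :: "'i \<Rightarrow> 'a::euclidean_space"
  assumes I: "finite I" and mono: "\<And>i j. i \<in> I \<Longrightarrow> j \<in> I \<Longrightarrow> (a i - a j) \<bullet> (y i - y j) \<le> 0"
  shows "\<exists>p. \<forall>i\<in>I. (p - a i) \<bullet> (p - y i) \<le> 0"
proof (cases "I = {}")
  case True then show ?thesis by simp
next
  case ne: False
  define h where "h = (\<lambda>i p. (p - a i) \<bullet> (p - y i))"
  define g where "g = (\<lambda>p. Max ((\<lambda>i. h i p) ` I))"
  have cont_h: "continuous_on UNIV (h i)" for i unfolding h_def by (intro continuous_intros)
  have cont_g: "continuous_on UNIV g" unfolding g_def
    by (rule continuous_on_Max_img[OF I ne cont_h])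
  have h_le_g: "h i q \<le> g q" if "i \<in> I" for i q
    unfolding g_def using I that by (intro Max_ge) auto
  have g_att: "\<exists>i\<in>I. h i q = g q" for q
  proof -
    have "g q \<in> (\<lambda>i. h i q) ` I" unfolding g_def using I ne by (intro Max_in) auto
    then show ?thesis by auto
  qed
  define C where "C = (\<Sum>i\<in>I. norm (a i) + norm (y i))"
  have aC: "norm (a i) \<le> C" and yC: "norm (y i) \<le> C" if "i \<in> I" for i
  proof -
    have "norm (a i) + norm (y i) \<le> C" unfolding C_def using I that
      by (intro member_le_sum) auto
    then show "norm (a i) \<le> C" "norm (y i) \<le> C" using norm_ge_zero[of "a i"] norm_ge_zero[of "y i"] by linarith+
  qed
  have C0: "0 \<le> C" unfolding C_def by (intro sum_nonneg) auto
  have ayC: "\<bar>a i \<bullet> y i\<bar> \<le> C * C" if "i \<in> I" for i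
  proof -
    have "\<bar>a i \<bullet> y i\<bar> \<le> norm (a i) * norm (y i)" by (rule Cauchy_Schwarz_ineq2)
    also have "\<dots> \<le> C * C" using aC[OF that] yC[OF that] using C0 by (intro mult_mono) auto
    finally show ?thesis .
  qed
  have lowb: "norm q * norm q - C * norm q - C * norm q - C * C \<le> h i q" if "i \<in> I" for i q
  proof -
    have e: "h i q = q \<bullet> q - q \<bullet> y i - a i \<bullet> q + a i \<bullet> y i"
      by (simp add: h_def inner_diff_left inner_diff_right)
    have "q \<bullet> y i \<le> norm q * C"
      using norm_cauchy_schwarz[of q "y i"] yC[OF that] mult_left_mono[OF yC[OF that], of "norm q"]
      by simp
    moreover have "a i \<bullet> q \<le> C * norm q"
      using norm_cauchy_schwarz[of "a i" q] aC[OF that] mult_right_mono[OF aC[OF that], of "norm q"]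
      by simp
    moreover have "q \<bullet> q = norm q * norm q" by (simp add: power2_norm_eq_inner[symmetric] power2_eq_square)
    ultimately show ?thesis using e ayC[OF that] by (simp add: algebra_simps)
  qed
  have g0: "g 0 \<le> C * C"
  proof -
    obtain i where "i \<in> I" "h i 0 = g 0" using g_att by blast
    then show ?thesis using ayC[of i] by (simp add: h_def)
  qed
  define R where "R = 3 * C + 1"
  have far: "g 0 < g q" if "R < norm q" for q
  proof -
    obtain i where i: "i \<in> I" using ne by blast
    have "(3 * C + 1) * (C + 1) \<le> norm q * (norm q - 2 * C)"
      using that C0 unfolding R_def by (intro mult_mono) auto
    moreover have "norm q * (norm q - 2 * C) = norm q * norm q - C * norm q - C * norm q"
      by (simp add: algebra_simps)
    moreover have "(3 * C + 1) * (C + 1) = 3 * (C * C) + 4 * C + 1"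
      by (simp add: algebra_simps)
    moreover have "0 \<le> C * C" by simp
    ultimately have "C * C < norm q * norm q - C * norm q - C * norm q - C * C"
      using C0 by linarith
    also have "\<dots> \<le> h i q" by (rule lowb[OF i])
    also have "\<dots> \<le> g q" by (rule h_le_g[OF i])
    finally show ?thesis using g0 by simp
  qed
  obtain p where pin: "p \<in> cball 0 R" and pmin: "\<And>q. q \<in> cball 0 R \<Longrightarrow> g p \<le> g q"
  proof -
    have "continuous_on (cball 0 R) g" using cont_g by (rule continuous_on_subset) simp
    moreover have "cball 0 R \<noteq> {}" using C0 R_def by simp
    ultimately have "\<exists>x\<in>cball 0 R. \<forall>y\<in>cball 0 R. g x \<le> g y"
      by (intro continuous_attains_inf) auto
    then show ?thesis using that by blast
  qed
  have gmin: "g p \<le> g q" for q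
  proof (cases "q \<in> cball 0 R")
    case True then show ?thesis by (rule pmin)
  next
    case False
    then have "g 0 < g q" by (intro far) simp
    moreover have "g p \<le> g 0" using C0 R_def by (intro pmin) simp
    ultimately show ?thesis by simp
  qed
  define J where "J = {i \<in> I. h i p = g p}"
  have J: "finite J" "J \<subseteq> I" "J \<noteq> {}" using I g_att[of p] by (auto simp: J_def)
  define v where "v = (\<lambda>i. 2 *\<^sub>R p - a i - y i)"
  have hull_eq: "convex hull (v ` J) =
      {sum (\<lambda>i. c i *\<^sub>R s i) J | c s. (\<forall>i\<in>J. c i \<ge> 0) \<and> sum c J = 1 \<and> (\<forall>i\<in>J. s i \<in> {v i})}"
  proof -
    have "v ` J = \<Union> ((\<lambda>i. {v i}) ` J)" by auto
    then show ?thesis using convex_hull_finite_union[of J "\<lambda>i. {v i}"] J by auto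
  qed
  show ?thesis
  proof (cases "0 \<in> convex hull (v ` J)")
    case True
    then obtain c s where c: "\<forall>i\<in>J. c i \<ge> 0" "sum c J = 1" "\<forall>i\<in>J. s i \<in> {v i}"
      and s0: "0 = sum (\<lambda>i. c i *\<^sub>R s i) J"
      unfolding hull_eq by blast
    have "(\<Sum>i\<in>J. c i *\<^sub>R (2 *\<^sub>R p - a i - y i)) = 0"
      using s0 c(3) by (simp add: v_def)
    then have "(\<Sum>i\<in>J. c i * ((p - a i) \<bullet> (p - y i))) \<le> 0"
      using J c by (intro df_key[where a=a and y=y]) (auto intro: mono)
    moreover have "(\<Sum>i\<in>J. c i * ((p - a i) \<bullet> (p - y i))) = (\<Sum>i\<in>J. c i * g p)"
      by (intro sum.cong refl) (simp add: J_def h_def)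
    moreover have "(\<Sum>i\<in>J. c i * g p) = g p" using c(2) by (simp add: sum_distrib_right[symmetric])
    ultimately have "g p \<le> 0" by simp
    then show ?thesis using h_le_g unfolding h_def by (meson order_trans)
  next
    case False
    have "convex (convex hull (v ` J))" by simp
    moreover have "closed (convex hull (v ` J))"
      using J by (intro compact_imp_closed compact_convex_hull finite_imp_compact) simp
    ultimately obtain w b where wb: "w \<bullet> 0 < b" "\<forall>x\<in>convex hull (v ` J). w \<bullet> x > b"
      using separating_hyperplane_closed_point[OF _ _ False] by blast
    have wv: "w \<bullet> v i > 0" if "i \<in> J" for i
    proof -
      have "v i \<in> convex hull (v ` J)" using that by (simp add: hull_inc)
      then show ?thesis using wb(1) wb(2) by fastforce
    qed
    have exp: "h i (p - t *\<^sub>R w) = h i p - t * (w \<bullet> v i) + t * (t * (w \<bullet> w))" for i t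
    proof -
      define P where "P = p - a i"
      define Q where "Q = p - y i"
      have 1: "h i (p - t *\<^sub>R w) = (P - t *\<^sub>R w) \<bullet> (Q - t *\<^sub>R w)"
        by (simp add: h_def P_def Q_def algebra_simps)
      have 2: "(P - t *\<^sub>R w) \<bullet> (Q - t *\<^sub>R w) = P \<bullet> Q - t * (w \<bullet> P) - t * (w \<bullet> Q) + t * (t * (w \<bullet> w))"
        by (simp add: inner_diff_left inner_diff_right inner_commute algebra_simps)
      have 3: "v i = P + Q" by (simp add: v_def P_def Q_def algebra_simps scaleR_2)
      have 4: "w \<bullet> v i = w \<bullet> P + w \<bullet> Q" using 3 by (simp add: inner_add_right)
      have 5: "h i p = P \<bullet> Q" by (simp add: h_def P_def Q_def)
      show ?thesis unfolding 1 2 4 5 by (simp add: algebra_simps)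
    qed
    have ev: "\<forall>\<^sub>F t in at_right 0. h i (p - t *\<^sub>R w) < g p" if "i \<in> I" for i
    proof (cases "i \<in> J")
      case True
      have "((\<lambda>t. t * (w \<bullet> w) - w \<bullet> v i) \<longlongrightarrow> 0 * (w \<bullet> w) - w \<bullet> v i) (at_right 0)"
        by (intro tendsto_intros)
      then have "\<forall>\<^sub>F t in at_right 0. t * (w \<bullet> w) - w \<bullet> v i < 0"
        using wv[OF True] by (intro order_tendstoD) auto
      moreover have "\<forall>\<^sub>F t in at_right 0. (0::real) < t" by (rule eventually_at_right_less)
      ultimately show ?thesis
      proof eventually_elim
        case (elim t)
        then have "t * (t * (w \<bullet> w) - w \<bullet> v i) < 0" by (simp add: mult_pos_neg)
        then show ?case using True exp[of i t] by (simp add: J_def algebra_simps)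
      qed
    next
      case False
      then have lt: "h i p < g p" using that h_le_g[of i p] by (auto simp: J_def)
      have "((\<lambda>t. h i p - t * (w \<bullet> v i) + t * (t * (w \<bullet> w))) \<longlongrightarrow>
              h i p - 0 * (w \<bullet> v i) + 0 * (0 * (w \<bullet> w))) (at_right 0)"
        by (intro tendsto_intros)
      then have "\<forall>\<^sub>F t in at_right 0. h i p - t * (w \<bullet> v i) + t * (t * (w \<bullet> w)) < g p"
        using lt by (intro order_tendstoD) auto
      then show ?thesis by eventually_elim (simp add: exp)
    qed
    have "\<forall>\<^sub>F t in at_right 0. \<forall>i\<in>I. h i (p - t *\<^sub>R w) < g p"
      using I ev by (intro eventually_ball_finite) auto
    then obtain t where t: "\<forall>i\<in>I. h i (p - t *\<^sub>R w) < g p"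
      using eventually_happens trivial_limit_at_right_real by blast
    obtain i where "i \<in> I" "h i (p - t *\<^sub>R w) = g (p - t *\<^sub>R w)" using g_att by blast
    then have "g (p - t *\<^sub>R w) < g p" using t by auto
    then show ?thesis using gmin by (meson not_le)
  qed
qed

lemma T_bounded:
  fixes p a y :: "'a::real_inner"
  assumes "(p - a) \<bullet> (p - y) \<le> 0"
  shows "norm p \<le> 2 * (norm a + norm y)"
proof (rule ccontr)
  define n where "n = norm p"
  define s where "s = norm a + norm y"
  assume "\<not> norm p \<le> 2 * (norm a + norm y)"
  then have ns: "n > 2 * s" by (simp add: n_def s_def)
  have s0: "s \<ge> 0" by (simp add: s_def)
  have e: "(p - a) \<bullet> (p - y) = p \<bullet> p - p \<bullet> y - a \<bullet> p + a \<bullet> y"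
    by (simp add: inner_diff_left inner_diff_right)
  have 1: "p \<bullet> y \<le> n * norm y" using norm_cauchy_schwarz[of p y] by (simp add: n_def)
  have 2: "a \<bullet> p \<le> norm a * n" using norm_cauchy_schwarz[of a p] by (simp add: n_def)
  have 3: "- (a \<bullet> y) \<le> norm a * norm y"
    using Cauchy_Schwarz_ineq2[of a y] by linarith
  have 4: "norm a * norm y \<le> s * s" unfolding s_def
    by (intro mult_mono) auto
  have 5: "p \<bullet> p = n * n" by (simp add: n_def power2_norm_eq_inner[symmetric] power2_eq_square)
  have 6: "n * n \<le> n * norm y + norm a * n + norm a * norm y" using assms e 1 2 3 5 by linarith
  have 7: "s * n = n * norm y + norm a * n" by (simp add: s_def algebra_simps)
  have 8: "n * n \<le> s * n + s * s" using 4 6 7 by linarith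
  have 9: "2 * s * n < n * n" using ns s0 by (intro mult_strict_right_mono) auto
  have 10: "s * (2 * s) \<le> s * n" using ns s0 by (intro mult_left_mono) auto
  have 11: "s * (2 * s) = 2 * (s * s)" "2 * s * n = 2 * (s * n)" by simp_all
  have "0 \<le> s * s" by simp
  then show False using 8 9 10 11 by linarith
qed

lemma minty:
  fixes A :: "'a::euclidean_space \<Rightarrow> 'a set"
  assumes A: "maximal_monotone A" and l: "l > 0"
  shows "\<exists>p. \<exists>u\<in>A p. p + l *\<^sub>R u = z"
proof -
  have mA: "monotone_op A" using A by (simp add: maximal_monotone_def)
  define G where "G = {(y, v). v \<in> A y}"
  have "G \<noteq> {}"
  proof
    assume "G = {}"
    then have Ae: "\<And>y. A y = {}" by (auto simp: G_def)
    have "monotone_op (\<lambda>_::'a. {0::'a})" by (simp add: monotone_op_def)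
    moreover have "\<forall>x. A x \<subseteq> (\<lambda>_. {0}) x" using Ae by simp
    ultimately have "(\<lambda>_. {0}) = A" using A by (simp add: maximal_monotone_def)
    then show False using Ae by (metis empty_iff insertI1)
  qed
  then obtain y0 v0 where g0: "(y0, v0) \<in> G" by auto
  define T where "T = (\<lambda>(y, v). {p. (p - (z - l *\<^sub>R v)) \<bullet> (p - y) \<le> 0})"
  have Tclosed: "closed (T g)" for g
    by (cases g) (simp add: T_def, intro closed_Collect_le continuous_intros)
  define S where "S = T (y0, v0)"
  have "bounded S"
  proof -
    have "S \<subseteq> cball 0 (2 * (norm (z - l *\<^sub>R v0) + norm y0))"
    proof
      fix x assume "x \<in> S"
      then have "(x - (z - l *\<^sub>R v0)) \<bullet> (x - y0) \<le> 0" by (simp add: S_def T_def)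
      from T_bounded[OF this] show "x \<in> cball 0 (2 * (norm (z - l *\<^sub>R v0) + norm y0))" by simp
    qed
    then show ?thesis using bounded_cball bounded_subset by blast
  qed
  then have Sc: "compact S" using Tclosed S_def by (simp add: compact_eq_bounded_closed)
  have "S \<inter> \<Inter> (T ` G) \<noteq> {}"
  proof (rule compact_imp_fip[OF Sc])
    show "\<And>U. U \<in> T ` G \<Longrightarrow> closed U" using Tclosed by blast
  next
    fix F' assume F': "finite F'" "F' \<subseteq> T ` G"
    then obtain G' where G': "G' \<subseteq> G" "finite G'" "F' = T ` G'"
      by (metis finite_subset_image)
    define I where "I = insert (y0, v0) G'"
    have "\<exists>p. \<forall>i\<in>I. (p - (\<lambda>(y, v). z - l *\<^sub>R v) i) \<bullet> (p - fst i) \<le> 0"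
    proof (rule df_finite)
      show "finite I" using G' by (simp add: I_def)
    next
      fix i j assume ij: "i \<in> I" "j \<in> I"
      then have "i \<in> G" "j \<in> G" using G' g0 by (auto simp: I_def)
      then obtain yi vi yj vj where i: "i = (yi, vi)" "vi \<in> A yi" and j: "j = (yj, vj)" "vj \<in> A yj"
        by (auto simp: G_def)
      have "0 \<le> (vi - vj) \<bullet> (yi - yj)" using mA i j by (simp add: monotone_op_def)
      moreover have "((z - l *\<^sub>R vi) - (z - l *\<^sub>R vj)) = - (l *\<^sub>R (vi - vj))"
        by (simp add: algebra_simps)
      ultimately show "((\<lambda>(y, v). z - l *\<^sub>R v) i - (\<lambda>(y, v). z - l *\<^sub>R v) j) \<bullet> (fst i - fst j) \<le> 0"
        using i j l by simp
    qed
    then obtain p where p: "\<forall>i\<in>I. (p - (\<lambda>(y, v). z - l *\<^sub>R v) i) \<bullet> (p - fst i) \<le> 0" by blast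
    have "p \<in> S \<inter> \<Inter> F'"
      using p unfolding G'(3) S_def T_def I_def by auto
    then show "S \<inter> \<Inter> F' \<noteq> {}" by blast
  qed
  then obtain p where p: "p \<in> \<Inter> (T ` G)" by blast
  define u where "u = (1 / l) *\<^sub>R (z - p)"
  have "u \<in> A p"
  proof (rule max_mono_ext[OF A])
    fix y v assume v: "v \<in> A y"
    then have "(p - (z - l *\<^sub>R v)) \<bullet> (p - y) \<le> 0" using p by (auto simp: T_def G_def)
    moreover have "u - v = (- 1 / l) *\<^sub>R (p - (z - l *\<^sub>R v))"
      using l by (simp add: u_def algebra_simps)
    ultimately show "0 \<le> (u - v) \<bullet> (p - y)"
      using l by (simp add: mult_le_0_iff divide_le_0_iff)
  qed
  moreover have "p + l *\<^sub>R u = z" using l by (simp add: u_def)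
  ultimately show ?thesis by blast
qed

lemma resolvent_char:
  fixes A :: "'a::euclidean_space \<Rightarrow> 'a set"
  assumes A: "maximal_monotone A" and l: "l > 0"
  shows "\<exists>u\<in>A (resolvent l A z). resolvent l A z + l *\<^sub>R u = z"
proof -
  obtain p u where pu: "u \<in> A p" "p + l *\<^sub>R u = z" using minty[OF A l] by blast
  have r: "resolvent l A z = p"
    using A l pu by (intro resolvent_eq) (auto simp: maximal_monotone_def)
  show ?thesis unfolding r using pu by blast
qed

lemma resolvent_nonexp:
  fixes A :: "'a::euclidean_space \<Rightarrow> 'a set"
  assumes A: "maximal_monotone A" and l: "l > 0"
  shows "norm (resolvent l A w - resolvent l A w') \<le> norm (w - w')"
proof -
  define p where "p = resolvent l A w"
  define q where "q = resolvent l A w'"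
  obtain u where u: "u \<in> A p" "p + l *\<^sub>R u = w" using resolvent_char[OF A l] p_def by blast
  obtain v where v: "v \<in> A q" "q + l *\<^sub>R v = w'" using resolvent_char[OF A l] q_def by blast
  have m: "0 \<le> (u - v) \<bullet> (p - q)" using A u v by (simp add: maximal_monotone_def monotone_op_def)
  define d where "d = p - q"
  define e where "e = u - v"
  have "w - w' = d + l *\<^sub>R e" using u v by (simp add: algebra_simps d_def e_def)
  moreover have "(d + l *\<^sub>R e) \<bullet> (d + l *\<^sub>R e) = d \<bullet> d + 2 * l * (e \<bullet> d) + (l * l) * (e \<bullet> e)"
    by (simp add: inner_add_left inner_add_right inner_commute algebra_simps)
  ultimately have "(w - w') \<bullet> (w - w') = (p - q) \<bullet> (p - q) + 2 * l * ((u - v) \<bullet> (p - q)) + (l * l) * ((u - v) \<bullet> (u - v))"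
    by (simp add: d_def e_def)
  moreover have "0 \<le> 2 * l * ((u - v) \<bullet> (p - q))" using m l by simp
  moreover have "0 \<le> (l * l) * ((u - v) \<bullet> (u - v))" by simp
  ultimately have "(p - q) \<bullet> (p - q) \<le> (w - w') \<bullet> (w - w')" by linarith
  then have "norm (p - q) ^ 2 \<le> norm (w - w') ^ 2" by (simp add: power2_norm_eq_inner)
  then show ?thesis unfolding p_def q_def by (simp add: power2_le_iff_abs_le)
qed

lemma energy_alg:
  fixes d e P Q :: "'a::real_inner"
  assumes h: "0 \<le> (- d + lm *\<^sub>R P - mu *\<^sub>R Q) \<bullet> (d + e)" and mu: "mu \<ge> 0"
  shows "(d + e) \<bullet> (d + e) - 2 * lm * (P \<bullet> (d + e))
     \<le> e \<bullet> e - 2 * mu * (Q \<bullet> e) - d \<bullet> d + 2 * mu * (norm Q * norm d)"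
proof -
  have h': "0 \<le> - (d \<bullet> d) - d \<bullet> e + lm * (P \<bullet> (d + e)) - mu * (Q \<bullet> d) - mu * (Q \<bullet> e)"
    using h by (simp add: inner_add_left inner_add_right inner_diff_left inner_commute algebra_simps)
  have sq: "(d + e) \<bullet> (d + e) = d \<bullet> d + 2 * (d \<bullet> e) + e \<bullet> e"
    by (simp add: inner_add_left inner_add_right inner_commute)
  have cs: "- (Q \<bullet> d) \<le> norm Q * norm d" using Cauchy_Schwarz_ineq2[of Q d] by linarith
  have "- mu * (Q \<bullet> d) \<le> mu * (norm Q * norm d)" using mult_left_mono[OF cs mu] by simp
  then show ?thesis using h' sq by linarith
qed

lemma amgm_half:
  fixes a b c :: real
  assumes "0 \<le> c"
  shows "c * (a * b) \<le> c / 2 * (a * a + b * b)"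
proof -
  have "0 \<le> (a - b) * (a - b)" by simp
  then have "2 * (a * b) \<le> a * a + b * b" by (simp add: algebra_simps)
  then have "c * (2 * (a * b)) \<le> c * (a * a + b * b)" using assms by (rule mult_left_mono)
  then show ?thesis by (simp add: algebra_simps)
qed


lemma fejer:
  fixes A :: "'a::euclidean_space \<Rightarrow> 'a set" and B :: "'a \<Rightarrow> 'a"
    and X Xp a :: "nat \<Rightarrow> 'a" and Lm mu :: "nat \<Rightarrow> real"
  assumes mA: "monotone_op A" and mB: "monotone_fun B" and dl: "0 < \<delta>" "\<delta> < 1"
    and z: "- B z \<in> A z"
    and Lpos: "\<And>k. Lm k > 0"
    and mu: "\<And>k. mu (Suc k) = Lm k" and Xp: "\<And>k. Xp (Suc k) = X k"
    and a: "\<And>k. a k \<in> A (X (Suc k))"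
    and it: "\<And>k. X (Suc k) + Lm k *\<^sub>R a k = X k - Lm k *\<^sub>R B (X k) - mu k *\<^sub>R (B (X k) - B (Xp k))"
    and acc: "\<And>k. Lm k * norm (B (X (Suc k)) - B (X k)) \<le> \<delta> / 2 * norm (X (Suc k) - X k)"
  shows "convergent (\<lambda>n. norm (X n - z))" and "(\<lambda>n. X (Suc n) - X n) \<longlonglongrightarrow> 0"
proof -
  define P where "P n = B (X (Suc n)) - B (X n)" for n
  define dd where "dd n = X (Suc n) - X n" for n
  define e where "e n = X (Suc n) - z" for n
  define E where "E n = e n \<bullet> e n - 2 * Lm n * (P n \<bullet> e n) + \<delta> / 2 * (dd n \<bullet> dd n)" for n
  have accP: "Lm n * norm (P n) \<le> \<delta> / 2 * norm (dd n)" for n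
    using acc[of n] unfolding P_def dd_def .
  have nsq: "v \<bullet> v = norm v * norm v" for v :: 'a
    by (simp add: power2_norm_eq_inner[symmetric] power2_eq_square)
  have onestep: "E (Suc n) \<le> E n - (1 - \<delta>) * (dd (Suc n) \<bullet> dd (Suc n))" for n
  proof -
    define d where "d = dd (Suc n)"
    have hA: "0 \<le> (a (Suc n) - (- B z)) \<bullet> (X (Suc (Suc n)) - z)"
      using mA a[of "Suc n"] z unfolding monotone_op_def by blast
    have hB: "0 \<le> (B (X (Suc (Suc n))) - B z) \<bullet> (X (Suc (Suc n)) - z)"
      using mB by (simp add: monotone_fun_def)
    have la: "Lm (Suc n) *\<^sub>R a (Suc n) = X (Suc n) - X (Suc (Suc n)) - Lm (Suc n) *\<^sub>R B (X (Suc n)) - Lm n *\<^sub>R P n"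
    proof -
      have "Lm (Suc n) *\<^sub>R a (Suc n) = X (Suc n) - Lm (Suc n) *\<^sub>R B (X (Suc n)) - Lm n *\<^sub>R P n - X (Suc (Suc n))"
        using it[of "Suc n"] unfolding mu Xp P_def[symmetric] by (metis add_diff_cancel_left')
      then show ?thesis by (simp add: algebra_simps)
    qed
    have "0 \<le> Lm (Suc n) * ((a (Suc n) - (- B z)) \<bullet> (X (Suc (Suc n)) - z))
            + Lm (Suc n) * ((B (X (Suc (Suc n))) - B z) \<bullet> (X (Suc (Suc n)) - z))"
      using hA hB Lpos[of "Suc n"] by simp
    also have "\<dots> = (Lm (Suc n) *\<^sub>R a (Suc n) + Lm (Suc n) *\<^sub>R B (X (Suc (Suc n)))) \<bullet> (X (Suc (Suc n)) - z)"
      by (simp add: inner_add_left inner_diff_left algebra_simps)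
    also have "Lm (Suc n) *\<^sub>R a (Suc n) + Lm (Suc n) *\<^sub>R B (X (Suc (Suc n)))
        = - d + Lm (Suc n) *\<^sub>R P (Suc n) - Lm n *\<^sub>R P n"
      unfolding la by (simp add: d_def dd_def P_def algebra_simps)
    also have "X (Suc (Suc n)) - z = d + e n" by (simp add: d_def dd_def e_def)
    finally have h: "0 \<le> (- d + Lm (Suc n) *\<^sub>R P (Suc n) - Lm n *\<^sub>R P n) \<bullet> (d + e n)" .
    have en: "e (Suc n) = d + e n" by (simp add: d_def dd_def e_def)
    have ea: "e (Suc n) \<bullet> e (Suc n) - 2 * Lm (Suc n) * (P (Suc n) \<bullet> e (Suc n))
        \<le> e n \<bullet> e n - 2 * Lm n * (P n \<bullet> e n) - d \<bullet> d + 2 * Lm n * (norm (P n) * norm d)"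
      unfolding en using energy_alg[OF h] Lpos[of n] by simp
    have "2 * Lm n * (norm (P n) * norm d) = 2 * norm d * (Lm n * norm (P n))" by simp
    also have "\<dots> \<le> 2 * norm d * (\<delta> / 2 * norm (dd n))"
      by (intro mult_left_mono accP) simp
    also have "\<dots> = \<delta> * (norm (dd n) * norm d)" by simp
    also have "\<dots> \<le> \<delta> / 2 * (norm (dd n) * norm (dd n) + norm d * norm d)"
      using dl by (intro amgm_half) simp
    finally have b: "2 * Lm n * (norm (P n) * norm d) \<le> \<delta> / 2 * (dd n \<bullet> dd n) + \<delta> / 2 * (d \<bullet> d)"
      by (simp only: nsq distrib_left)
    have E1: "E (Suc n) = e (Suc n) \<bullet> e (Suc n) - 2 * Lm (Suc n) * (P (Suc n) \<bullet> e (Suc n)) + \<delta> / 2 * (d \<bullet> d)"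
      by (simp add: E_def d_def)
    have E2: "E n = e n \<bullet> e n - 2 * Lm n * (P n \<bullet> e n) + \<delta> / 2 * (dd n \<bullet> dd n)"
      by (simp add: E_def)
    have r1: "\<delta> / 2 * (d \<bullet> d) + \<delta> / 2 * (d \<bullet> d) = \<delta> * (d \<bullet> d)" by (simp add: algebra_simps)
    have r2: "(1 - \<delta>) * (d \<bullet> d) = d \<bullet> d - \<delta> * (d \<bullet> d)" by (simp add: algebra_simps)
    show ?thesis unfolding d_def[symmetric] using ea b E1 E2 r1 r2 by linarith
  qed
  have lower: "(1 - \<delta> / 2) * (e n \<bullet> e n) \<le> E n" for n
  proof -
    have cs: "P n \<bullet> e n \<le> norm (P n) * norm (e n)" by (rule norm_cauchy_schwarz)
    have "2 * Lm n * (P n \<bullet> e n) \<le> 2 * Lm n * (norm (P n) * norm (e n))"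
      using Lpos[of n] by (intro mult_left_mono cs) auto
    also have "\<dots> = 2 * norm (e n) * (Lm n * norm (P n))" by (simp only: mult_ac)
    also have "\<dots> \<le> 2 * norm (e n) * (\<delta> / 2 * norm (dd n))"
      by (intro mult_left_mono accP) simp
    also have "\<dots> = \<delta> * (norm (dd n) * norm (e n))" by simp
    also have "\<dots> \<le> \<delta> / 2 * (norm (dd n) * norm (dd n) + norm (e n) * norm (e n))"
      using dl by (intro amgm_half) simp
    finally have b: "2 * Lm n * (P n \<bullet> e n) \<le> \<delta> / 2 * (dd n \<bullet> dd n) + \<delta> / 2 * (e n \<bullet> e n)"
      by (simp only: nsq distrib_left)
    have r: "(1 - \<delta> / 2) * (e n \<bullet> e n) = e n \<bullet> e n - \<delta> / 2 * (e n \<bullet> e n)" by (simp add: algebra_simps)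
    have gen: "\<And>x c d ee y::real. x \<le> c + d \<Longrightarrow> y = ee - d \<Longrightarrow> y \<le> ee - x + c" by linarith
    show ?thesis unfolding E_def by (rule gen[OF b r])
  qed
  have E0: "0 \<le> E n" for n
  proof -
    have "0 \<le> (1 - \<delta> / 2) * (e n \<bullet> e n)" using dl by (intro mult_nonneg_nonneg) auto
    then show ?thesis using lower[of n] by linarith
  qed
  have "decseq E"
  proof (rule decseq_SucI)
    fix n
    have "0 \<le> (1 - \<delta>) * (dd (Suc n) \<bullet> dd (Suc n))" using dl by (intro mult_nonneg_nonneg) auto
    then show "E (Suc n) \<le> E n" using onestep[of n] by linarith
  qed
  then obtain LE where LE: "E \<longlonglongrightarrow> LE" using E0 decseq_convergent by blast
  have dd0: "(\<lambda>n. dd (Suc n) \<bullet> dd (Suc n)) \<longlonglongrightarrow> 0"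
  proof (rule Lim_null_comparison)
    show "\<forall>\<^sub>F n in sequentially. norm (dd (Suc n) \<bullet> dd (Suc n)) \<le> (E n - E (Suc n)) / (1 - \<delta>)"
      using onestep dl by (intro always_eventually allI) (simp add: field_simps)
    have "(\<lambda>n. (E n - E (Suc n)) / (1 - \<delta>)) \<longlonglongrightarrow> (LE - LE) / (1 - \<delta>)"
      by (intro tendsto_intros LE LIMSEQ_Suc) (use dl in simp)
    then show "(\<lambda>n. (E n - E (Suc n)) / (1 - \<delta>)) \<longlonglongrightarrow> 0" by simp
  qed
  then have "(\<lambda>n. sqrt (dd (Suc n) \<bullet> dd (Suc n))) \<longlonglongrightarrow> sqrt 0" by (intro tendsto_intros)
  then have "(\<lambda>n. norm (dd (Suc n))) \<longlonglongrightarrow> 0" by (simp add: norm_eq_sqrt_inner)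
  then have "(\<lambda>n. dd (Suc n)) \<longlonglongrightarrow> 0" by (simp add: tendsto_norm_zero_iff)
  then have ddlim: "dd \<longlonglongrightarrow> 0" by (rule LIMSEQ_imp_Suc)
  moreover have "dd = (\<lambda>n. X (Suc n) - X n)" by (simp add: dd_def fun_eq_iff)
  ultimately show "(\<lambda>n. X (Suc n) - X n) \<longlonglongrightarrow> 0" by simp
  have ebound: "norm (e n) \<le> sqrt (E 0 / (1 - \<delta> / 2))" for n
  proof -
    have "(1 - \<delta> / 2) * (e n \<bullet> e n) \<le> E 0"
      using lower[of n] decseqD[OF \<open>decseq E\<close>, of 0 n] by simp
    then have "e n \<bullet> e n \<le> E 0 / (1 - \<delta> / 2)" using dl by (simp add: field_simps)
    then show ?thesis by (simp add: norm_eq_sqrt_inner)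
  qed
  define M where "M = sqrt (E 0 / (1 - \<delta> / 2))"
  have mid: "(\<lambda>n. 2 * Lm n * (P n \<bullet> e n)) \<longlonglongrightarrow> 0"
  proof (rule Lim_null_comparison)
    show "\<forall>\<^sub>F n in sequentially. norm (2 * Lm n * (P n \<bullet> e n)) \<le> \<delta> * M * norm (dd n)"
    proof (intro always_eventually allI)
      fix n
      have "norm (2 * Lm n * (P n \<bullet> e n)) = 2 * Lm n * \<bar>P n \<bullet> e n\<bar>" using Lpos[of n] by (simp add: abs_mult)
      also have "\<dots> \<le> 2 * Lm n * (norm (P n) * norm (e n))"
        using Cauchy_Schwarz_ineq2[of "P n" "e n"] Lpos[of n] by (intro mult_left_mono) auto
      also have "\<dots> = 2 * norm (e n) * (Lm n * norm (P n))" by simp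
      also have "\<dots> \<le> 2 * norm (e n) * (\<delta> / 2 * norm (dd n))"
        by (intro mult_left_mono accP) simp
      also have "\<dots> = \<delta> * norm (dd n) * norm (e n)" by simp
      also have "\<dots> \<le> \<delta> * norm (dd n) * M"
        using ebound[of n] dl unfolding M_def by (intro mult_left_mono) auto
      finally show "norm (2 * Lm n * (P n \<bullet> e n)) \<le> \<delta> * M * norm (dd n)" by (simp add: mult_ac)
    qed
    have "(\<lambda>n. \<delta> * M * norm (dd n)) \<longlonglongrightarrow> \<delta> * M * norm (0::'a)"
      by (intro tendsto_intros ddlim)
    then show "(\<lambda>n. \<delta> * M * norm (dd n)) \<longlonglongrightarrow> 0" by simp
  qed
  have "(\<lambda>n. E n + 2 * Lm n * (P n \<bullet> e n) - \<delta> / 2 * (dd n \<bullet> dd n)) \<longlonglongrightarrow> LE + 0 - \<delta> / 2 * ((0::'a) \<bullet> 0)"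
    by (intro tendsto_intros LE mid tendsto_inner[OF ddlim ddlim])
  then have "(\<lambda>n. e n \<bullet> e n) \<longlonglongrightarrow> LE" by (simp add: E_def)
  then have "(\<lambda>n. sqrt (e n \<bullet> e n)) \<longlonglongrightarrow> sqrt LE" by (intro tendsto_intros)
  then have "(\<lambda>n. norm (X (Suc n) - z)) \<longlonglongrightarrow> sqrt LE" by (simp add: norm_eq_sqrt_inner e_def)
  then have "(\<lambda>n. norm (X n - z)) \<longlonglongrightarrow> sqrt LE" by (rule LIMSEQ_imp_Suc)
  then show "convergent (\<lambda>n. norm (X n - z))" by (rule convergentI)
qed

lemma ll_isCont:
  assumes "locally_lipschitz B"
  shows "isCont B y"
proof -
  obtain U L where U: "open U" "y \<in> U" "L-lipschitz_on U B"
    using assms unfolding locally_lipschitz_def by blast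
  have "continuous_on U B" using U(3) by (rule lipschitz_on_continuous_on)
  then show ?thesis using U(1,2) by (simp add: continuous_on_eq_continuous_at)
qed

lemma ll_compact:
  fixes B :: "'a::metric_space \<Rightarrow> 'b::metric_space"
  assumes ll: "locally_lipschitz B" and K: "compact K"
  obtains L where "L-lipschitz_on K B"
proof -
  have "local_lipschitz {0::real} K (\<lambda>t. B)"
  proof (rule local_lipschitzI)
    fix t x assume "t \<in> {0::real}" "x \<in> K"
    obtain U L where U: "open U" "x \<in> U" "L-lipschitz_on U B"
      using ll unfolding locally_lipschitz_def by blast
    obtain e where e: "e > 0" "ball x e \<subseteq> U" using U(1,2) openE by blast
    have "cball x (e / 2) \<inter> K \<subseteq> U" using e by (auto simp: subset_iff)
    then have "L-lipschitz_on (cball x (e / 2) \<inter> K) B" by (rule lipschitz_on_subset[OF U(3)])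
    then show "\<exists>u>0. \<exists>L. \<forall>t\<in>cball t u \<inter> {0}. L-lipschitz_on (cball x u \<inter> K) B"
      using e by (intro exI[of _ "e / 2"]) auto
  qed
  from local_lipschitz_compact_implies_lipschitz[OF this K compact_sing] obtain L
    where "\<And>t. t \<in> {0::real} \<Longrightarrow> L-lipschitz_on K B" by auto
  then show ?thesis using that by blast
qed

theorem theorem3p4:
  fixes A :: "'a::euclidean_space \<Rightarrow> 'a set"
    and B :: "'a \<Rightarrow> 'a"
    and \<delta> \<sigma> :: real
    and x :: "int \<Rightarrow> 'a"
    and lam :: "int \<Rightarrow> real"
    and rho :: "nat \<Rightarrow> real"
    and i :: "nat \<Rightarrow> nat"
  assumes A: "maximal_monotone A"
    and Bmono: "monotone_fun B"
    and Blip: "locally_lipschitz B"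
    and nonempty: "zeros_sum A B \<noteq> {}"
    and delta: "0 < \<delta>" "\<delta> < 1"
    and sigma: "0 < \<sigma>" "\<sigma> < 1"
    and lam0: "lam (-1) > 0"
    and rho: "\<And>k. rho k \<in> {1, 1 / \<sigma>}"
    and step: "\<And>k. lam (int k) = rho k * lam (int k - 1) * \<sigma> ^ i k"
    and iter: "\<And>k. x (int k + 1) =
      resolvent (lam (int k)) A
        (x (int k) - lam (int k) *\<^sub>R B (x (int k))
           - lam (int k - 1) *\<^sub>R (B (x (int k)) - B (x (int k - 1))))"
    and accept: "\<And>k. lam (int k) * norm (B (x (int k + 1)) - B (x (int k)))
                     \<le> \<delta> / 2 * norm (x (int k + 1) - x (int k))"
    and least: "\<And>k j. j < i k \<Longrightarrow>
      (let l = rho k * lam (int k - 1) * \<sigma> ^ j;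
           p = resolvent l A
                 (x (int k) - l *\<^sub>R B (x (int k))
                    - lam (int k - 1) *\<^sub>R (B (x (int k)) - B (x (int k - 1))))
       in \<not> (l * norm (B p - B (x (int k))) \<le> \<delta> / 2 * norm (p - x (int k))))"
  shows "\<exists>z \<in> zeros_sum A B. (\<lambda>k. x (int k)) \<longlonglongrightarrow> z"
proof -
  have mA: "monotone_op A" using A by (simp add: maximal_monotone_def)
  have zeros_iff: "z \<in> zeros_sum A B \<longleftrightarrow> - B z \<in> A z" for z
  proof
    assume "z \<in> zeros_sum A B"
    then obtain u where "u \<in> A z" "u + B z = 0" by (auto simp: zeros_sum_def)
    then show "- B z \<in> A z" by (metis add_eq_0_iff2 minus_minus)
  next
    assume "- B z \<in> A z"
    then show "z \<in> zeros_sum A B" unfolding zeros_sum_def by (intro CollectI bexI[of _ "- B z"]) auto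
  qed
  have rho_ge: "rho k \<ge> 1" for k
  proof -
    have "1 \<le> 1 / \<sigma>" using sigma by simp
    then show ?thesis using rho[of k] by auto
  qed
  define X where "X n = x (int n)" for n
  define Xp where "Xp n = x (int n - 1)" for n
  define Lm where "Lm n = lam (int n)" for n
  define mu where "mu n = lam (int n - 1)" for n
  have mu_Suc: "mu (Suc k) = Lm k" for k by (simp add: mu_def Lm_def)
  have Xp_Suc: "Xp (Suc k) = X k" for k by (simp add: Xp_def X_def)
  have X_Suc: "X (Suc k) = x (int k + 1)" for k by (simp add: X_def add.commute)
  have stepN: "Lm k = rho k * mu k * \<sigma> ^ i k" for k by (simp add: Lm_def mu_def step)
  have mupos: "mu k > 0" for k
  proof (induction k)
    case 0 then show ?case using lam0 by (simp add: mu_def)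
  next
    case (Suc k)
    then show ?case using rho_ge[of k] sigma by (simp add: mu_Suc stepN)
  qed
  have Lpos: "Lm k > 0" for k using mupos[of k] rho_ge[of k] sigma by (simp add: stepN)
  define W where "W k = X k - Lm k *\<^sub>R B (X k) - mu k *\<^sub>R (B (X k) - B (Xp k))" for k
  have iterN: "X (Suc k) = resolvent (Lm k) A (W k)" for k
    unfolding X_Suc W_def using iter[of k] by (simp add: X_def Lm_def mu_def Xp_def)
  have accN: "Lm k * norm (B (X (Suc k)) - B (X k)) \<le> \<delta> / 2 * norm (X (Suc k) - X k)" for k
    unfolding X_Suc using accept[of k] by (simp add: X_def Lm_def)
  have ex: "\<exists>u. u \<in> A (X (Suc k)) \<and> X (Suc k) + Lm k *\<^sub>R u = W k" for k
    using resolvent_char[OF A Lpos[of k], of "W k"] unfolding iterN[of k, symmetric] by blast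
  then have "\<forall>k. \<exists>u. u \<in> A (X (Suc k)) \<and> X (Suc k) + Lm k *\<^sub>R u = W k" by blast
  from choice[OF this] obtain a where a': "\<forall>k. a k \<in> A (X (Suc k)) \<and> X (Suc k) + Lm k *\<^sub>R a k = W k"
    by blast
  have a: "\<And>k. a k \<in> A (X (Suc k))" and aeq: "\<And>k. X (Suc k) + Lm k *\<^sub>R a k = W k"
    using a' by auto
  have it: "X (Suc k) + Lm k *\<^sub>R a k = X k - Lm k *\<^sub>R B (X k) - mu k *\<^sub>R (B (X k) - B (Xp k))" for k
    using aeq[of k] by (simp add: W_def)
  note fej = fejer[where A=A and B=B and X=X and Xp=Xp and a=a and Lm=Lm and mu=mu and \<delta>=\<delta>, OF mA Bmono delta _ Lpos mu_Suc Xp_Suc a it accN]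
  obtain z0 where z0: "z0 \<in> zeros_sum A B" using nonempty by blast
  then have z0A: "- B z0 \<in> A z0" using zeros_iff by blast
  have dlim: "(\<lambda>n. X (Suc n) - X n) \<longlonglongrightarrow> 0" using fej(2)[OF z0A] .
  have "convergent (\<lambda>n. norm (X n - z0))" using fej(1)[OF z0A] .
  then have "Bseq (\<lambda>n. norm (X n - z0))" by (rule convergent_imp_Bseq)
  then obtain R where R: "R > 0" "\<And>n. norm (X n - z0) \<le> R" by (auto simp: Bseq_def)
  have Bcont: "isCont B y" for y using Blip by (rule ll_isCont)
  have "compact (B ` cball z0 R)"
    by (intro compact_continuous_image continuous_at_imp_continuous_on ballI Bcont) simp
  then have "bounded (B ` cball z0 R)" by (rule compact_imp_bounded)
  then obtain M0 where "\<forall>y\<in>B ` cball z0 R. norm y \<le> M0" by (auto simp: bounded_iff)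
  then have M0: "\<And>y. y \<in> cball z0 R \<Longrightarrow> norm (B y) \<le> M0" by blast
  define M where "M = M0 + norm (B z0)"
  have MB: "norm (B y - B z0) \<le> M" if "y \<in> cball z0 R" for y
    using M0[OF that] norm_triangle_ineq4[of "B y" "B z0"] by (simp add: M_def)
  have M_nn: "0 \<le> M" using MB[of z0] R by simp
  define C0 where "C0 = lam (-1) * norm (B (X 0) - B (Xp 0))"
  have C0_nn: "0 \<le> C0" using lam0 by (simp add: C0_def)
  have Xin: "X n \<in> cball z0 R" for n using R(2)[of n] by (simp add: dist_norm norm_minus_commute)
  have muQ: "mu k * norm (B (X k) - B (Xp k)) \<le> C0 + \<delta> * R" for k
  proof (cases k)
    case 0
    then show ?thesis using delta R by (simp add: C0_def mu_def)
  next
    case (Suc m)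
    have "mu k * norm (B (X k) - B (Xp k)) \<le> \<delta> / 2 * norm (X (Suc m) - X m)"
      using accN[of m] by (simp add: Suc mu_Suc Xp_Suc)
    also have "norm (X (Suc m) - X m) \<le> R + R"
      using norm_triangle_ineq4[of "X (Suc m) - z0" "X m - z0"] R(2)[of m] R(2)[of "Suc m"] by simp
    then have "\<delta> / 2 * norm (X (Suc m) - X m) \<le> \<delta> / 2 * (R + R)" using delta by (intro mult_left_mono) auto
    finally show ?thesis using C0_nn delta by simp
  qed
  define R2 where "R2 = R + M / \<sigma> + C0 + \<delta> * R"
  have R_R2: "R \<le> R2" using M_nn C0_nn delta R sigma by (simp add: R2_def)
  have trial: "norm (resolvent l A (X k - l *\<^sub>R B (X k) - mu k *\<^sub>R (B (X k) - B (Xp k))) - z0) \<le> R2"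
    if l: "0 < l" "l \<le> 1 / \<sigma>" for l k
  proof -
    have z0r: "resolvent l A (z0 - l *\<^sub>R B z0) = z0"
      using z0A by (intro resolvent_eq[OF mA l(1)]) (auto simp: algebra_simps)
    have "norm (resolvent l A (X k - l *\<^sub>R B (X k) - mu k *\<^sub>R (B (X k) - B (Xp k))) - z0)
        \<le> norm ((X k - l *\<^sub>R B (X k) - mu k *\<^sub>R (B (X k) - B (Xp k))) - (z0 - l *\<^sub>R B z0))"
      using resolvent_nonexp[OF A l(1), of "X k - l *\<^sub>R B (X k) - mu k *\<^sub>R (B (X k) - B (Xp k))" "z0 - l *\<^sub>R B z0"]
      by (simp only: z0r)
    also have "(X k - l *\<^sub>R B (X k) - mu k *\<^sub>R (B (X k) - B (Xp k))) - (z0 - l *\<^sub>R B z0)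
        = (X k - z0) - l *\<^sub>R (B (X k) - B z0) - mu k *\<^sub>R (B (X k) - B (Xp k))"
      by (simp add: algebra_simps)
    also have "norm \<dots> \<le> norm (X k - z0) + norm (l *\<^sub>R (B (X k) - B z0)) + norm (mu k *\<^sub>R (B (X k) - B (Xp k)))"
      by (rule order_trans[OF norm_triangle_ineq4 add_right_mono[OF norm_triangle_ineq4]])
    also have "norm (l *\<^sub>R (B (X k) - B z0)) \<le> M / \<sigma>"
    proof -
      have "norm (l *\<^sub>R (B (X k) - B z0)) = l * norm (B (X k) - B z0)" using l by simp
      also have "\<dots> \<le> (1 / \<sigma>) * M" using l MB[OF Xin] sigma M_nn by (intro mult_mono) auto
      finally show ?thesis by simp
    qed
    also have "norm (mu k *\<^sub>R (B (X k) - B (Xp k))) = mu k * norm (B (X k) - B (Xp k))"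
      using mupos[of k] by simp
    finally show ?thesis using R(2)[of k] muQ[of k] by (simp add: R2_def)
  qed
  obtain L0 where L0: "L0-lipschitz_on (cball z0 R2) B"
    using ll_compact[OF Blip compact_cball] by blast
  define L where "L = L0 + 1"
  have L: "L-lipschitz_on (cball z0 R2) B" "L > 0"
    using L0 lipschitz_on_nonneg[OF L0] by (auto simp: L_def intro: lipschitz_on_mono)
  define m where "m = min (lam (-1)) (min 1 (\<sigma> * \<delta> / (2 * L)))"
  have m_pos: "m > 0" using lam0 sigma delta L by (simp add: m_def)
  have core: "Lm k \<ge> m" if muk: "mu k \<ge> m" for k
  proof (cases "i k")
    case 0
    have "Lm k = rho k * mu k" by (simp add: stepN 0)
    moreover have "1 * mu k \<le> rho k * mu k"
      using mupos[of k] by (intro mult_right_mono rho_ge) simp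
    ultimately show ?thesis using muk by simp
  next
    case (Suc j)
    show ?thesis
    proof (rule ccontr)
      assume "\<not> m \<le> Lm k"
      then have small: "Lm k < m" by simp
      define l where "l = rho k * mu k * \<sigma> ^ j"
      have Lml: "Lm k = \<sigma> * l" by (simp add: stepN Suc l_def)
      have lpos: "l > 0" using Lpos[of k] Lml sigma by (simp add: zero_less_mult_iff)
      have "\<sigma> * l < 1" using small Lml by (simp add: m_def)
      then have lle: "l \<le> 1 / \<sigma>" using sigma by (simp add: field_simps)
      define p where "p = resolvent l A (X k - l *\<^sub>R B (X k) - mu k *\<^sub>R (B (X k) - B (Xp k)))"
      have fail: "\<not> (l * norm (B p - B (X k)) \<le> \<delta> / 2 * norm (p - X k))"
        using least[of j k] Suc unfolding p_def l_def Let_def X_def Xp_def mu_def by simp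
      have pin: "p \<in> cball z0 R2" using trial[OF lpos lle, of k]
        by (simp add: p_def dist_norm norm_minus_commute)
      have xin: "X k \<in> cball z0 R2" using Xin[of k] R_R2 by auto
      have lip: "norm (B p - B (X k)) \<le> L * norm (p - X k)"
        using lipschitz_onD[OF L(1) pin xin] by (simp add: dist_norm)
      have "\<delta> / 2 * norm (p - X k) < l * norm (B p - B (X k))" using fail by simp
      also have "\<dots> \<le> l * (L * norm (p - X k))" using lip lpos by (intro mult_left_mono) auto
      finally have "\<delta> / 2 * norm (p - X k) < (l * L) * norm (p - X k)" by simp
      then have "\<delta> / 2 < l * L"
        by (rule mult_right_less_imp_less) simp
      then have "\<sigma> * \<delta> / (2 * L) < \<sigma> * l" using L(2) sigma by (simp add: field_simps)
      then have "m < Lm k" using Lml by (simp add: m_def)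
      then show False using small by simp
    qed
  qed
  have Lbound: "Lm k \<ge> m" for k
  proof (induction k)
    case 0
    have "mu 0 \<ge> m" by (simp add: mu_def m_def)
    then show ?case by (rule core)
  next
    case (Suc k)
    then have "mu (Suc k) \<ge> m" by (simp add: mu_Suc)
    then show ?case by (rule core)
  qed
  define w where "w k = a k + B (X (Suc k))" for k
  have wbound: "norm (w (Suc j)) \<le> ((1 + \<delta> / 2) * norm (X (Suc (Suc j)) - X (Suc j)) + \<delta> / 2 * norm (X (Suc j) - X j)) / m" for j
  proof -
    define k where "k = Suc j"
    have weq: "Lm k *\<^sub>R w k = (X k - X (Suc k)) + Lm k *\<^sub>R (B (X (Suc k)) - B (X k)) - mu k *\<^sub>R (B (X k) - B (Xp k))"
    proof -
      have "Lm k *\<^sub>R a k = X k - Lm k *\<^sub>R B (X k) - mu k *\<^sub>R (B (X k) - B (Xp k)) - X (Suc k)"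
        using it[of k] by (metis add_diff_cancel_left')
      then show ?thesis by (simp add: w_def scaleR_add_right algebra_simps)
    qed
    have "norm (Lm k *\<^sub>R w k) \<le> norm (X k - X (Suc k)) + norm (Lm k *\<^sub>R (B (X (Suc k)) - B (X k))) + norm (mu k *\<^sub>R (B (X k) - B (Xp k)))"
      unfolding weq by (rule order_trans[OF norm_triangle_ineq4 add_right_mono[OF norm_triangle_ineq]])
    also have "norm (Lm k *\<^sub>R (B (X (Suc k)) - B (X k))) \<le> \<delta> / 2 * norm (X (Suc k) - X k)"
      using accN[of k] Lpos[of k] by simp
    also have "norm (mu k *\<^sub>R (B (X k) - B (Xp k))) \<le> \<delta> / 2 * norm (X (Suc j) - X j)"
      using accN[of j] mupos[of k] by (simp add: k_def mu_Suc Xp_Suc)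
    finally have "Lm k * norm (w k) \<le> (1 + \<delta> / 2) * norm (X (Suc k) - X k) + \<delta> / 2 * norm (X (Suc j) - X j)"
      using Lpos[of k] by (simp add: norm_minus_commute algebra_simps)
    moreover have "m * norm (w k) \<le> Lm k * norm (w k)" using Lbound[of k] by (intro mult_right_mono) auto
    ultimately have "m * norm (w k) \<le> (1 + \<delta> / 2) * norm (X (Suc k) - X k) + \<delta> / 2 * norm (X (Suc j) - X j)"
      by linarith
    then show ?thesis using m_pos by (simp add: k_def field_simps)
  qed
  have dnorm: "(\<lambda>n. norm (X (Suc n) - X n)) \<longlonglongrightarrow> 0"
    using dlim by (simp add: tendsto_norm_zero_iff)
  have "(\<lambda>j. w (Suc j)) \<longlonglongrightarrow> 0"
  proof (rule Lim_null_comparison)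
    show "\<forall>\<^sub>F j in sequentially. norm (w (Suc j)) \<le> ((1 + \<delta> / 2) * norm (X (Suc (Suc j)) - X (Suc j)) + \<delta> / 2 * norm (X (Suc j) - X j)) / m"
      using wbound by simp
    have "(\<lambda>j. ((1 + \<delta> / 2) * norm (X (Suc (Suc j)) - X (Suc j)) + \<delta> / 2 * norm (X (Suc j) - X j)) / m)
        \<longlonglongrightarrow> ((1 + \<delta> / 2) * 0 + \<delta> / 2 * 0) / m"
      using m_pos by (intro tendsto_intros dnorm LIMSEQ_Suc[OF dnorm]) simp
    then show "(\<lambda>j. ((1 + \<delta> / 2) * norm (X (Suc (Suc j)) - X (Suc j)) + \<delta> / 2 * norm (X (Suc j) - X j)) / m) \<longlonglongrightarrow> 0"
      by simp
  qed
  then have wlim: "w \<longlonglongrightarrow> 0" by (rule LIMSEQ_imp_Suc)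
  have "seq_compact (cball z0 R)" by (intro compact_imp_seq_compact compact_cball)
  then obtain xb r where xb: "xb \<in> cball z0 R" "strict_mono r" "(X \<circ> r) \<longlonglongrightarrow> xb"
    using Xin by (metis seq_compactE)
  have "(\<lambda>n. X (r n) + (X (Suc (r n)) - X (r n))) \<longlonglongrightarrow> xb + 0"
    using xb(3) LIMSEQ_subseq_LIMSEQ[OF dlim xb(2)] by (intro tendsto_add) (auto simp: o_def)
  then have Xs: "(\<lambda>n. X (Suc (r n))) \<longlonglongrightarrow> xb" by simp
  have "(\<lambda>n. w (r n) - B (X (Suc (r n)))) \<longlonglongrightarrow> 0 - B xb"
    using LIMSEQ_subseq_LIMSEQ[OF wlim xb(2)] isCont_tendsto_compose[OF Bcont Xs]
    by (intro tendsto_diff) (auto simp: o_def)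
  then have "(\<lambda>n. a (r n)) \<longlonglongrightarrow> - B xb" by (simp add: w_def)
  then have "- B xb \<in> A xb"
    using max_mono_closed[OF A Xs] a by blast
  then have xbz: "xb \<in> zeros_sum A B" using zeros_iff by blast
  have "convergent (\<lambda>n. norm (X n - xb))" using fej(1)[OF \<open>- B xb \<in> A xb\<close>] .
  then obtain c where c: "(\<lambda>n. norm (X n - xb)) \<longlonglongrightarrow> c" by (auto simp: convergent_def)
  have "(\<lambda>n. norm (X (r n) - xb)) \<longlonglongrightarrow> norm (xb - xb)"
    using xb(3) by (intro tendsto_intros) (simp add: o_def)
  moreover have "(\<lambda>n. norm (X (r n) - xb)) \<longlonglongrightarrow> c"
    using LIMSEQ_subseq_LIMSEQ[OF c xb(2)] by (simp add: o_def)
  ultimately have "c = 0" using LIMSEQ_unique by fastforce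
  then have "(\<lambda>n. X n - xb) \<longlonglongrightarrow> 0" using c by (simp add: tendsto_norm_zero_iff)
  then have "X \<longlonglongrightarrow> xb" by (simp add: Lim_null[symmetric])
  then have "(\<lambda>k. x (int k)) \<longlonglongrightarrow> xb" by (simp add: X_def[abs_def])
  then show ?thesis using xbz by blast
qed

end
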